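(* For all typing environments $\Theta,\Gamma$, processes $P$ and session types $S$: (1) if $\Theta\cdot\Gamma\vdash P:S$ is not derivable, then there is a failing derivation of $\Theta\cdot\Gamma\vdash P:S$; (2) if there is a failing derivation of $\Theta\cdot\Gamma\vdash P:S$, then $\Theta\cdot\Gamma\vdash P:S$ is not derivable.
   Context: Values $v$, value variables $x$, process variables $X$; $a$ ranges over values and value variables; boolean predicates $A$ are type-checked by standard rules. Processes: $P,Q ::= \triangleleft \mathtt{l}(a).P \mid \triangleright\{\mathtt{l}_i(x_i).P_i\}_{i\in I} \mid \mu_X.P \mid X \mid \mathsf{if}\ A\ \mathsf{then}\ P\ \mathsf{else}\ Q \mid \mathbf{0}$ (guarded recursion). Base types $\mathsf{B}$ ($\mathsf{Int},\mathsf{Str},\mathsf{Bool},\dots$, tuples). Session types $S ::= \oplus\{!\mathtt{l}_i(\mathsf{B}_i).S_i\}_{i\in I} \mid \&\{?\mathtt{l}_i(\mathsf{B}_i).S_i\}_{i\in I} \mid \mathsf{rec}\ X.S \mid X \mid \mathsf{end}$, $I\neq\emptyset$, labels pairwise distinct, guarded recursion, equi-recursive. Typing judgements $\Theta\cdot\Gamma\vdash P:S$ with $\Theta$ a partial map from process variables to session types and $\Gamma$ a partial map from value variables to base types; $\Gamma\vdash x:\mathsf{B}$ if $\Gamma(x)=\mathsf{B}$, $\Gamma\vdash v:\mathsf{B}$ if $v\in\mathsf{B}$. Derivability is by the rules: (tBra) if for all $i\in I$, $\Theta\cdot\Gamma,x_i:\mathsf{B}_i\vdash P_i:S_i$, then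 $\Theta\cdot\Gamma\vdash \triangleright\{\mathtt{l}_i(x_i).P_i\}_{i\in I\cup J} : \&\{?\mathtt{l}_i(\mathsf{B}_i).S_i\}_{i\in I}$; (tSel) if some $i\in I$ has $\mathtt{l}=\mathtt{l}_i$, $\Gamma\vdash a:\mathsf{B}_i$ and $\Theta\cdot\Gamma\vdash P:S_i$, then $\Theta\cdot\Gamma\vdash \triangleleft\mathtt{l}(a).P : \oplus\{!\mathtt{l}_i(\mathsf{B}_i).S_i\}_{i\in I}$; (tRec) $\Theta,X:S\cdot\Gamma\vdash P:S$ implies $\Theta\cdot\Gamma\vdash\mu_X.P:S$; (tPVar) $\Theta(X)=S$ implies $\Theta\cdot\Gamma\vdash X:S$; (tIf) $\Gamma\vdash A:\mathsf{Bool}$, $\Theta\cdot\Gamma\vdash P:S$, $\Theta\cdot\Gamma\vdash Q:S$ imply $\Theta\cdot\Gamma\vdash \mathsf{if}\ A\ \mathsf{then}\ P\ \mathsf{else}\ Q:S$; (tNil) $\Theta\cdot\Gamma\vdash\mathbf{0}:\mathsf{end}$. Rule function $\Phi$, mapping a judgement $J=\Theta\cdot\Gamma\vdash P:S$ to a set: $\Phi(J)=\{\Theta\cdot\Gamma,x_i:\mathsf{B}_i\vdash P_i:S_i\}_{i\in I}$ if $P=\triangleright\{\mathtt{l}_j(x_j).P_j\}_{j\in I\cup J'}$ and $S=\&\{?\mathtt{l}_i(\mathsf{B}_i).S_i\}_{i\in I}$ for some $I,J'$; $\Phi(J)=\{\Theta\cdot\Gamma\vdash P':S_i\}$ if $P=\triangleleft\mathtt{l}(a).P'$,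 $S=\oplus\{!\mathtt{l}_i(\mathsf{B}_i).S_i\}_{i\in I}$ and there is $i\in I$ with $\mathtt{l}=\mathtt{l}_i$ and $\Gamma\vdash a:\mathsf{B}_i$; $\Phi(J)=\{\Theta\cdot\Gamma\vdash P_1:S,\ \Theta\cdot\Gamma\vdash Q_1:S\}$ if $P=\mathsf{if}\ A\ \mathsf{then}\ P_1\ \mathsf{else}\ Q_1$ and $\Gamma\vdash A:\mathsf{Bool}$; $\Phi(J)=\{\Theta,X:S\cdot\Gamma\vdash P':S\}$ if $P=\mu_X.P'$; $\Phi(J)=\{\mathsf{tt}\}$ if $P=\mathbf{0}$ and $S=\mathsf{end}$, or if $P=X$ and $\Theta(X)=S$; $\Phi(J)=\emptyset$ in all other cases. A failing derivation of $\Theta\cdot\Gamma\vdash P:S$ is a finite sequence of judgements $(J_0,J_1,\dots,J_n)$, each of the form $\Theta_i\cdot\Gamma_i\vdash P_i:S_i$, such that $J_0=\Theta\cdot\Gamma\vdash P:S$, $J_i\in\Phi(J_{i-1})$ for all $i\in 1..n$, and $\Phi(J_n)=\emptyset$. *)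

theory Defs
  imports Main "HOL-Library.Finite_Map"
begin

type_synonym label = string
type_synonym vname = string
type_synonym pname = string

datatype val = VInt int | VStr string | VBool bool | VTup "val list"

datatype btype = BInt | BStr | BBool | BTup "btype list"

inductive val_has_type :: "val \<Rightarrow> btype \<Rightarrow> bool" where
  "val_has_type (VInt n) BInt"
| "val_has_type (VStr s) BStr"
| "val_has_type (VBool b) BBool"
| "list_all2 val_has_type vs Bs \<Longrightarrow> val_has_type (VTup vs) (BTup Bs)"

datatype atom = AVal val | AVar vname

type_synonym venv = "vname \<rightharpoonup> btype"

inductive atom_has_type :: "venv \<Rightarrow> atom \<Rightarrow> btype \<Rightarrow> bool" where
  "\<Gamma> x = Some B \<Longrightarrow> atom_has_type \<Gamma> (AVar x) B"
| "val_has_type v B \<Longrightarrow> atom_has_type \<Gamma> (AVal v) B"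

datatype expr = EAtom atom | ENot expr | EAnd expr expr | EOr expr expr
  | EEq expr expr | ELess expr expr | EPlus expr expr

inductive expr_has_type :: "venv \<Rightarrow> expr \<Rightarrow> btype \<Rightarrow> bool" where
  "atom_has_type \<Gamma> a B \<Longrightarrow> expr_has_type \<Gamma> (EAtom a) B"
| "expr_has_type \<Gamma> e BBool \<Longrightarrow> expr_has_type \<Gamma> (ENot e) BBool"
| "expr_has_type \<Gamma> e1 BBool \<Longrightarrow> expr_has_type \<Gamma> e2 BBool \<Longrightarrow> expr_has_type \<Gamma> (EAnd e1 e2) BBool"
| "expr_has_type \<Gamma> e1 BBool \<Longrightarrow> expr_has_type \<Gamma> e2 BBool \<Longrightarrow> expr_has_type \<Gamma> (EOr e1 e2) BBool"
| "expr_has_type \<Gamma> e1 B \<Longrightarrow> expr_has_type \<Gamma> e2 B \<Longrightarrow> expr_has_type \<Gamma> (EEq e1 e2) BBool"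
| "expr_has_type \<Gamma> e1 BInt \<Longrightarrow> expr_has_type \<Gamma> e2 BInt \<Longrightarrow> expr_has_type \<Gamma> (ELess e1 e2) BBool"
| "expr_has_type \<Gamma> e1 BInt \<Longrightarrow> expr_has_type \<Gamma> e2 BInt \<Longrightarrow> expr_has_type \<Gamma> (EPlus e1 e2) BInt"

text \<open>Branching: a finite map from (pairwise distinct) labels to bound variable and continuation.\<close>
datatype proc =
    PSel label atom proc
  | PBra "(label, vname \<times> proc) fmap"
  | PRec pname proc
  | PVar pname
  | PIf expr proc proc
  | PNil

fun unguarded :: "pname \<Rightarrow> proc \<Rightarrow> bool" where
  "unguarded X (PVar Y) = (X = Y)"
| "unguarded X (PRec Y P) = (X \<noteq> Y \<and> unguarded X P)"
| "unguarded X (PIf A P Q) = (unguarded X P \<or> unguarded X Q)"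
| "unguarded X _ = False"

inductive guarded :: "proc \<Rightarrow> bool" where
  "guarded P \<Longrightarrow> guarded (PSel l a P)"
| "(\<forall>l x P. fmlookup bs l = Some (x, P) \<longrightarrow> guarded P) \<Longrightarrow> guarded (PBra bs)"
| "\<not> unguarded X P \<Longrightarrow> guarded P \<Longrightarrow> guarded (PRec X P)"
| "guarded (PVar X)"
| "guarded P \<Longrightarrow> guarded Q \<Longrightarrow> guarded (PIf A P Q)"
| "guarded PNil"

section \<open>Session types (equi-recursive = possibly infinite regular trees)\<close>

codatatype stype =
    TSel "(label, btype \<times> stype) fmap"
  | TBra "(label, btype \<times> stype) fmap"
  | TEnd

coinductive wf_stype :: "stype \<Rightarrow> bool" where
  "fmdom ts \<noteq> {||} \<Longrightarrow> (\<forall>l B S. fmlookup ts l = Some (B, S) \<longrightarrow> wf_stype S) \<Longrightarrow> wf_stype (TSel ts)"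
| "fmdom ts \<noteq> {||} \<Longrightarrow> (\<forall>l B S. fmlookup ts l = Some (B, S) \<longrightarrow> wf_stype S) \<Longrightarrow> wf_stype (TBra ts)"
| "wf_stype TEnd"

type_synonym penv = "pname \<rightharpoonup> stype"

inductive typed :: "penv \<Rightarrow> venv \<Rightarrow> proc \<Rightarrow> stype \<Rightarrow> bool" where
  tBra: "fmdom ts |\<subseteq>| fmdom bs \<Longrightarrow>
         (\<forall>l B S x P. fmlookup ts l = Some (B, S) \<longrightarrow> fmlookup bs l = Some (x, P)
             \<longrightarrow> typed \<Theta> (\<Gamma>(x \<mapsto> B)) P S) \<Longrightarrow>
         typed \<Theta> \<Gamma> (PBra bs) (TBra ts)"
| tSel: "fmlookup ts l = Some (B, S) \<Longrightarrow> atom_has_type \<Gamma> a B \<Longrightarrow> typed \<Theta> \<Gamma> P S \<Longrightarrow>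
         typed \<Theta> \<Gamma> (PSel l a P) (TSel ts)"
| tRec: "typed (\<Theta>(X \<mapsto> S)) \<Gamma> P S \<Longrightarrow> typed \<Theta> \<Gamma> (PRec X P) S"
| tPVar: "\<Theta> X = Some S \<Longrightarrow> typed \<Theta> \<Gamma> (PVar X) S"
| tIf: "expr_has_type \<Gamma> A BBool \<Longrightarrow> typed \<Theta> \<Gamma> P S \<Longrightarrow> typed \<Theta> \<Gamma> Q S \<Longrightarrow>
        typed \<Theta> \<Gamma> (PIf A P Q) S"
| tNil: "typed \<Theta> \<Gamma> PNil TEnd"

type_synonym judgement = "penv \<times> venv \<times> proc \<times> stype"

datatype goal = TT | Jdg judgement

fun Phi :: "judgement \<Rightarrow> goal set" where
  "Phi (\<Theta>, \<Gamma>, P, S) =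
    (case P of
       PBra bs \<Rightarrow>
         (case S of
            TBra ts \<Rightarrow>
              (if fmdom ts |\<subseteq>| fmdom bs
               then {Jdg (\<Theta>, \<Gamma>(x \<mapsto> B), P', S') | l B S' x P'.
                       fmlookup ts l = Some (B, S') \<and> fmlookup bs l = Some (x, P')}
               else {})
          | _ \<Rightarrow> {})
     | PSel l a P' \<Rightarrow>
         (case S of
            TSel ts \<Rightarrow>
              (case fmlookup ts l of
                 Some (B, S') \<Rightarrow> (if atom_has_type \<Gamma> a B then {Jdg (\<Theta>, \<Gamma>, P', S')} else {})
               | None \<Rightarrow> {})
          | _ \<Rightarrow> {})
     | PIf A P1 Q1 \<Rightarrow>
         (if expr_has_type \<Gamma> A BBool then {Jdg (\<Theta>, \<Gamma>, P1, S), Jdg (\<Theta>, \<Gamma>, Q1, S)} else {})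
     | PRec X P' \<Rightarrow> {Jdg (\<Theta>(X \<mapsto> S), \<Gamma>, P', S)}
     | PNil \<Rightarrow> (if S = TEnd then {TT} else {})
     | PVar X \<Rightarrow> (if \<Theta> X = Some S then {TT} else {}))"

definition failing_derivation :: "judgement \<Rightarrow> judgement list \<Rightarrow> bool" where
  "failing_derivation J js \<longleftrightarrow>
     js \<noteq> [] \<and> js ! 0 = J \<and>
     (\<forall>i. 0 < i \<and> i < length js \<longrightarrow> Jdg (js ! i) \<in> Phi (js ! (i - 1))) \<and>
     Phi (last js) = {}"

end

theory Submission
  imports Defs
begin


definition good :: "judgement \<Rightarrow> bool" where
  "good J = (case J of (\<Theta>, \<Gamma>, P, S) \<Rightarrow> typed \<Theta> \<Gamma> P S \<and> wf_stype S \<and> (\<forall>X T. \<Theta> X = Some T \<longrightarrow> wf_stype T))"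

lemma good_step:
  assumes "typed \<Theta> \<Gamma> P S" "wf_stype S" "\<forall>X T. \<Theta> X = Some T \<longrightarrow> wf_stype T"
  shows "Phi (\<Theta>, \<Gamma>, P, S) \<noteq> {} \<and> (\<forall>J'. Jdg J' \<in> Phi (\<Theta>, \<Gamma>, P, S) \<longrightarrow> good J')"
  using assms
proof (cases rule: typed.cases)
  case (tBra ts bs)
  from tBra assms(2) have ne: "fmdom ts \<noteq> {||}" and wfc: "\<forall>l B S. fmlookup ts l = Some (B, S) \<longrightarrow> wf_stype S"
    by (auto elim: wf_stype.cases)
  then obtain l where "l |\<in>| fmdom ts" by auto
  then obtain B S' where l1: "fmlookup ts l = Some (B, S')" by (auto simp: fmdom_notI)
  with tBra obtain x P' where "fmlookup bs l = Some (x, P')"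
    by (metis fmdomE fmdomI fsubsetD surj_pair)
  with l1 tBra have "Jdg (\<Theta>, \<Gamma>(x \<mapsto> B), P', S') \<in> Phi (\<Theta>, \<Gamma>, P, S)" by auto
  then have "Phi (\<Theta>, \<Gamma>, P, S) \<noteq> {}" by blast
  moreover have "\<forall>J'. Jdg J' \<in> Phi (\<Theta>, \<Gamma>, P, S) \<longrightarrow> good J'"
    using tBra wfc assms(3) by (auto simp: good_def)
  ultimately show ?thesis by blast
next
  case (tSel ts l B S' a P')
  from tSel assms(2) have "\<forall>l B S. fmlookup ts l = Some (B, S) \<longrightarrow> wf_stype S"
    by (auto elim: wf_stype.cases)
  then show ?thesis using tSel assms(3) by (auto simp: good_def)
next
  case (tRec X P')
  then show ?thesis using assms by (auto simp: good_def)
next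
  case (tPVar X)
  then show ?thesis by auto
next
  case (tIf A P1 Q1)
  then show ?thesis using assms by (auto simp: good_def)
next
  case tNil
  then show ?thesis by auto
qed

lemma good_step':
  assumes "good J"
  shows "Phi J \<noteq> {} \<and> (\<forall>J'. Jdg J' \<in> Phi J \<longrightarrow> good J')"
proof -
  obtain \<Theta> \<Gamma> P S where J: "J = (\<Theta>, \<Gamma>, P, S)" by (cases J) auto
  from assms J have "typed \<Theta> \<Gamma> P S" "wf_stype S" "\<forall>X T. \<Theta> X = Some T \<longrightarrow> wf_stype T"
    by (simp_all add: good_def)
  from good_step[OF this] J show ?thesis by simp
qed

lemma part2:
  assumes "failing_derivation J js" "good J"
  shows False
proof -
  from assms have ne: "js \<noteq> []" and h0: "js ! 0 = J"
    and st: "\<forall>i. 0 < i \<and> i < length js \<longrightarrow> Jdg (js ! i) \<in> Phi (js ! (i - 1))"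
    and fin: "Phi (last js) = {}" by (auto simp: failing_derivation_def)
  have "\<forall>i. i < length js \<longrightarrow> good (js ! i)"
  proof (intro allI)
    fix i show "i < length js \<longrightarrow> good (js ! i)"
    proof (induction i)
      case 0 then show ?case using h0 assms(2) by simp
    next
      case (Suc i)
      show ?case
      proof
        assume "Suc i < length js"
        with Suc have g: "good (js ! i)" by simp
        from st \<open>Suc i < length js\<close> have "Jdg (js ! Suc i) \<in> Phi (js ! i)"
          by (metis diff_Suc_1 zero_less_Suc)
        with g show "good (js ! Suc i)"
          using good_step' by blast
      qed
    qed
  qed
  then have "good (last js)" using ne by (simp add: last_conv_nth)
  then have "Phi (last js) \<noteq> {}"
    using good_step' by blast
  with fin show False by simp
qed

lemma cons_fd:
  assumes "failing_derivation J' js" "Jdg J' \<in> Phi J"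
  shows "failing_derivation J (J # js)"
  unfolding failing_derivation_def
proof (intro conjI allI impI)
  from assms(1) have ne: "js \<noteq> []" and h0: "js ! 0 = J'"
    and st: "\<forall>i. 0 < i \<and> i < length js \<longrightarrow> Jdg (js ! i) \<in> Phi (js ! (i - 1))"
    and fin: "Phi (last js) = {}" by (auto simp: failing_derivation_def)
  show "J # js \<noteq> []" by simp
  show "(J # js) ! 0 = J" by simp
  show "Phi (last (J # js)) = {}" using ne fin by simp
  fix i assume i: "0 < i \<and> i < length (J # js)"
  show "Jdg ((J # js) ! i) \<in> Phi ((J # js) ! (i - 1))"
  proof (cases "i = 1")
    case True then show ?thesis using h0 assms(2) by simp
  next
    case False
    then obtain k where k: "i = Suc (Suc k)" using i by (metis One_nat_def gr0_conv_Suc not0_implies_Suc)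
    have "Jdg (js ! Suc k) \<in> Phi (js ! k)" using st i k by (metis Suc_less_SucD diff_Suc_1 length_Cons zero_less_Suc)
    then show ?thesis using k by simp
  qed
qed

lemma nil_fd:
  assumes "Phi J = {}"
  shows "failing_derivation J [J]"
  using assms unfolding failing_derivation_def by auto

lemma part1:
  "\<not> typed \<Theta> \<Gamma> P S \<Longrightarrow> \<exists>js. failing_derivation (\<Theta>, \<Gamma>, P, S) js"
proof (induction P arbitrary: \<Theta> \<Gamma> S)
  case (PSel l a P')
  show ?case
  proof (cases "Phi (\<Theta>, \<Gamma>, PSel l a P', S) = {}")
    case True then show ?thesis using nil_fd by blast
  next
    case False
    obtain ts where s1: "S = TSel ts" using False by (cases S) auto
    obtain B S' where s2: "fmlookup ts l = Some (B, S')"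
      using False s1 by (cases "fmlookup ts l") auto
    have s3: "atom_has_type \<Gamma> a B" using False s1 s2 by (auto split: if_splits)
    note s = s1 s2 s3
    with PSel.prems have "\<not> typed \<Theta> \<Gamma> P' S'" by (auto intro: typed.intros)
    with PSel.IH obtain js where "failing_derivation (\<Theta>, \<Gamma>, P', S') js" by blast
    moreover have "Jdg (\<Theta>, \<Gamma>, P', S') \<in> Phi (\<Theta>, \<Gamma>, PSel l a P', S)" using s by simp
    ultimately show ?thesis using cons_fd by blast
  qed
next
  case (PBra bs)
  show ?case
  proof (cases "Phi (\<Theta>, \<Gamma>, PBra bs, S) = {}")
    case True then show ?thesis using nil_fd by blast
  next
    case False
    then obtain ts where s: "S = TBra ts" "fmdom ts |\<subseteq>| fmdom bs"
      by (auto split: stype.splits if_splits)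
    with PBra.prems obtain l B S' x P' where l: "fmlookup ts l = Some (B, S')" "fmlookup bs l = Some (x, P')"
       "\<not> typed \<Theta> (\<Gamma>(x \<mapsto> B)) P' S'"
      by (meson typed.tBra)
    have "P' \<in> Basic_BNFs.snds (x, P')" by simp
    moreover have "(x, P') \<in> fmran' bs" using l by (simp add: fmran'I)
    ultimately obtain js where "failing_derivation (\<Theta>, \<Gamma>(x \<mapsto> B), P', S') js"
      using PBra.IH l(3) by blast
    moreover have "Jdg (\<Theta>, \<Gamma>(x \<mapsto> B), P', S') \<in> Phi (\<Theta>, \<Gamma>, PBra bs, S)" using s l by auto
    ultimately show ?thesis using cons_fd by blast
  qed
next
  case (PRec X P')
  then have "\<not> typed (\<Theta>(X \<mapsto> S)) \<Gamma> P' S" by (auto intro: typed.intros)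
  with PRec.IH obtain js where "failing_derivation (\<Theta>(X \<mapsto> S), \<Gamma>, P', S) js" by blast
  moreover have "Jdg (\<Theta>(X \<mapsto> S), \<Gamma>, P', S) \<in> Phi (\<Theta>, \<Gamma>, PRec X P', S)" by simp
  ultimately show ?case using cons_fd by blast
next
  case (PVar X)
  then have "Phi (\<Theta>, \<Gamma>, PVar X, S) = {}" by (auto intro: typed.intros)
  then show ?case using nil_fd by blast
next
  case (PIf A P1 Q1)
  show ?case
  proof (cases "expr_has_type \<Gamma> A BBool")
    case False
    then have "Phi (\<Theta>, \<Gamma>, PIf A P1 Q1, S) = {}" by simp
    then show ?thesis using nil_fd by blast
  next
    case True
    with PIf.prems have "\<not> typed \<Theta> \<Gamma> P1 S \<or> \<not> typed \<Theta> \<Gamma> Q1 S" by (auto intro: typed.intros)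
    then show ?thesis
    proof
      assume "\<not> typed \<Theta> \<Gamma> P1 S"
      with PIf.IH(1) obtain js where "failing_derivation (\<Theta>, \<Gamma>, P1, S) js" by blast
      moreover have "Jdg (\<Theta>, \<Gamma>, P1, S) \<in> Phi (\<Theta>, \<Gamma>, PIf A P1 Q1, S)" using True by simp
      ultimately show ?thesis using cons_fd by blast
    next
      assume "\<not> typed \<Theta> \<Gamma> Q1 S"
      with PIf.IH(2) obtain js where "failing_derivation (\<Theta>, \<Gamma>, Q1, S) js" by blast
      moreover have "Jdg (\<Theta>, \<Gamma>, Q1, S) \<in> Phi (\<Theta>, \<Gamma>, PIf A P1 Q1, S)" using True by simp
      ultimately show ?thesis using cons_fd by blast
    qed
  qed
next
  case PNil
  then have "Phi (\<Theta>, \<Gamma>, PNil, S) = {}" by (auto intro: typed.intros)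
  then show ?case using nil_fd by blast
qed

theorem mainTheorem5:
  fixes \<Theta> :: penv and \<Gamma> :: venv and P :: proc and S :: stype
  assumes "guarded P"
    and "wf_stype S"
    and "\<forall>X T. \<Theta> X = Some T \<longrightarrow> wf_stype T"
  shows "(\<not> typed \<Theta> \<Gamma> P S \<longrightarrow> (\<exists>js. failing_derivation (\<Theta>, \<Gamma>, P, S) js))
       \<and> ((\<exists>js. failing_derivation (\<Theta>, \<Gamma>, P, S) js) \<longrightarrow> \<not> typed \<Theta> \<Gamma> P S)"
  using part1 part2[of "(\<Theta>, \<Gamma>, P, S)"] assms(2,3) by (auto simp: good_def)

end
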